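(* Let $\mathbb{F}$ be a field and $f(z)=\sum_{m\ge0}c_mz^m\in\mathbb{F}[[z]]$. Suppose there exist integers $\ell>k\ge1$ such that $H_\ell(f)H_k(f)\neq0$. Then the Padé approximant $[k-1/k]_f(z)$ exists, and there exist a nonzero element $h_k\in\mathbb{F}$ and an integer $k'$ with $k\le k'<\ell$ such that $$f(z)-[k-1/k]_f(z)=h_kz^{k+k'}+\mathcal{O}(z^{k+k'+1}).$$
   Context: For $n\ge1$, the Hankel determinant of $f$ is $H_n(f)=\det(c_{i+j})_{0\le i,j\le n-1}\in\mathbb{F}$, and $H_0(f)=1$. For nonnegative integers $p,q$, the Padé approximant $[p/q]_f(z)$ is the rational fraction $P(z)/Q(z)$ with $P,Q\in\mathbb{F}[z]$, $\deg P\le p$, $\deg Q\le q$, and $f(z)-P(z)/Q(z)=\mathcal{O}(z^{p+q+1})$ in $\mathbb{F}[[z]]$ (the fraction, when it exists, is unique). *)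

theory Defs
  imports "HOL-Computational_Algebra.Polynomial_FPS" "Jordan_Normal_Form.Determinant"
begin

definition hankel_det :: "nat \<Rightarrow> 'a::field fps \<Rightarrow> 'a" where
  "hankel_det n f = det (mat n n (\<lambda>(i, j). fps_nth f (i + j)))"

text \<open>R is the power series expansion of the Pade approximant [p/q]_f:
  R = P/Q with deg P <= p, deg Q <= q, P/Q a power series (Q(0) <> 0, w.l.o.g. after
  cancelling common factors), and f - P/Q = O(z^(p+q+1)).\<close>
definition is_pade :: "nat \<Rightarrow> nat \<Rightarrow> 'a::field fps \<Rightarrow> 'a fps \<Rightarrow> bool" where
  "is_pade p q f R \<longleftrightarrow>
     (\<exists>P Q. degree P \<le> p \<and> degree Q \<le> q \<and> poly Q 0 \<noteq> 0 \<and>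
            R = fps_of_poly P / fps_of_poly Q \<and>
            (\<forall>m \<le> p + q. fps_nth (f - R) m = 0))"

end

theory Submission
  imports Defs
begin

lemma mult_nth_shift:
  fixes Q :: "'a::field poly" and f :: "'a fps"
  assumes "degree Q \<le> k"
  shows "fps_nth (fps_of_poly Q * f) (i+k) = (\<Sum>t=0..k. fps_nth f (i+t) * coeff Q (k-t))"
proof -
  have "fps_nth (fps_of_poly Q * f) (i+k) = (\<Sum>j=0..i+k. coeff Q j * fps_nth f (i+k-j))"
    by (simp add: fps_mult_nth)
  also have "\<dots> = (\<Sum>j=0..k. coeff Q j * fps_nth f (i+k-j))"
    by (rule sum.mono_neutral_right) (use assms in \<open>auto intro!: coeff_eq_0\<close>)
  also have "\<dots> = (\<Sum>t=0..k. coeff Q (k-t) * fps_nth f (i+k-(k-t)))"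
    by (subst sum.atLeastAtMost_rev) simp
  also have "\<dots> = (\<Sum>t=0..k. fps_nth f (i+t) * coeff Q (k-t))"
    by (rule sum.cong) (auto simp: mult.commute)
  finally show ?thesis .
qed

lemma fps_mult_low:
  fixes E G :: "'a::field fps"
  assumes "\<forall>i<N. fps_nth E i = 0"
  shows "\<forall>m<N. fps_nth (E*G) m = 0" and "fps_nth (E*G) N = fps_nth E N * fps_nth G 0"
proof -
  show "\<forall>m<N. fps_nth (E*G) m = 0"
    using assms by (auto simp: fps_mult_nth intro!: sum.neutral)
  have "fps_nth (E*G) N = (\<Sum>i=0..N. fps_nth E i * fps_nth G (N-i))" by (simp add: fps_mult_nth)
  also have "\<dots> = fps_nth E N * fps_nth G (N-N) + (\<Sum>i\<in>{0..N}-{N}. fps_nth E i * fps_nth G (N-i))"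
    by (subst sum.remove[of _ N]) auto
  also have "(\<Sum>i\<in>{0..N}-{N}. fps_nth E i * fps_nth G (N-i)) = 0"
    using assms by (auto intro!: sum.neutral)
  finally show "fps_nth (E*G) N = fps_nth E N * fps_nth G 0" by simp
qed

theorem theorem3p1:
  fixes f :: "'a::field fps" and k l :: nat
  assumes "1 \<le> k" and "k < l"
    and "hankel_det l f * hankel_det k f \<noteq> 0"
  shows "(\<exists>R. is_pade (k - 1) k f R) \<and>
         (\<forall>R. is_pade (k - 1) k f R \<longrightarrow>
            (\<exists>h k'. h \<noteq> 0 \<and> k \<le> k' \<and> k' < l \<and>
               (\<forall>m < k + k'. fps_nth (f - R) m = 0) \<and>
               fps_nth (f - R) (k + k') = h))"
proof
  have Hk: "hankel_det k f \<noteq> 0" and Hl: "hankel_det l f \<noteq> 0" using assms(3) by auto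
  show "\<exists>R. is_pade (k - 1) k f R"
  proof -
    define A where "A = mat k k (\<lambda>(i, j). fps_nth f (i + j))"
    define b where "b = vec k (\<lambda>i. - fps_nth f (i+k))"
    have Ac: "A \<in> carrier_mat k k" by (simp add: A_def)
    have "det A \<noteq> 0" using Hk by (simp add: A_def hankel_det_def)
    from det_non_zero_imp_unit[OF Ac this, of "()"]
    obtain B where Bc: "B \<in> carrier_mat k k" and AB: "A * B = 1\<^sub>m k"
      by (auto simp: Units_def ring_mat_def)
    define x where "x = B *\<^sub>v b"
    have xc: "x \<in> carrier_vec k" using Bc by (simp add: x_def b_def)
    have "A *\<^sub>v x = b"
    proof -
      have bc: "b \<in> carrier_vec k" by (simp add: b_def)
      have "A *\<^sub>v (B *\<^sub>v b) = (A * B) *\<^sub>v b"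
        using assoc_mult_mat_vec[OF Ac Bc bc] by simp
      thus ?thesis using AB bc by (simp add: x_def)
    qed
    hence sol: "(\<Sum>t<k. fps_nth f (i+t) * x$t) = - fps_nth f (i+k)" if "i < k" for i
    proof -
      assume "A *\<^sub>v x = b"
      hence "(A *\<^sub>v x) $ i = b $ i" by simp
      thus ?thesis using that xc
        by (simp add: A_def b_def scalar_prod_def row_def atLeast0LessThan)
    qed
    define q where "q n = (if n = 0 then 1 else if n \<le> k then x$(k-n) else 0)" for n
    define Q where "Q = Poly (map q [0..<Suc k])"
    have cQ: "coeff Q n = q n" for n
      by (simp add: Q_def nth_default_def q_def del: upt_Suc)
    have dQ: "degree Q \<le> k" by (rule degree_le) (auto simp: cQ q_def)
    have Q0: "poly Q 0 \<noteq> 0" by (simp add: poly_0_coeff_0 cQ q_def)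
    define p where "p n = (if n < k then fps_nth (fps_of_poly Q * f) n else 0)" for n
    define P where "P = Poly (map p [0..<k])"
    have cP: "coeff P n = p n" for n
      by (simp add: P_def nth_default_def p_def)
    have dP: "degree P \<le> k - 1" by (rule degree_le) (auto simp: cP p_def)
    have low: "fps_nth (fps_of_poly Q * f) (i+k) = 0" if "i < k" for i
    proof -
      have "fps_nth (fps_of_poly Q * f) (i+k) = (\<Sum>t=0..k. fps_nth f (i+t) * coeff Q (k-t))"
        by (rule mult_nth_shift[OF dQ])
      also have "\<dots> = (\<Sum>t<Suc k. fps_nth f (i+t) * q (k-t))"
        by (simp add: cQ atLeast0AtMost lessThan_Suc_atMost)
      also have "\<dots> = (\<Sum>t<k. fps_nth f (i+t) * q (k-t)) + fps_nth f (i+k)"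
        by (simp add: q_def)
      also have "(\<Sum>t<k. fps_nth f (i+t) * q (k-t)) = (\<Sum>t<k. fps_nth f (i+t) * x$t)"
        by (rule sum.cong) (auto simp: q_def)
      finally show ?thesis using sol[OF that] by simp
    qed
    define E where "E = fps_of_poly Q * f - fps_of_poly P"
    have E0: "\<forall>m<2*k. fps_nth E m = 0"
    proof (intro allI impI)
      fix m assume m: "m < 2*k"
      show "fps_nth E m = 0"
      proof (cases "m < k")
        case True thus ?thesis by (simp add: E_def cP p_def)
      next
        case False
        then obtain i where "m = i + k" "i < k" using m by (metis add.commute le_Suc_ex not_less add_less_cancel_left mult_2)
        thus ?thesis using low by (simp add: E_def cP p_def)
      qed
    qed
    have FQ0: "fps_nth (fps_of_poly Q) 0 \<noteq> 0" using Q0 by (simp add: poly_0_coeff_0)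
    define R where "R = fps_of_poly P / fps_of_poly Q"
    have "f - R = E * inverse (fps_of_poly Q)"
    proof -
      have "E * inverse (fps_of_poly Q) = f * (fps_of_poly Q * inverse (fps_of_poly Q)) - fps_of_poly P * inverse (fps_of_poly Q)"
        by (simp add: E_def algebra_simps)
      also have "\<dots> = f - R" using FQ0 by (simp add: inverse_mult_eq_1' R_def fps_divide_unit)
      finally show ?thesis by simp
    qed
    hence "\<forall>m \<le> k - 1 + k. fps_nth (f - R) m = 0"
      using fps_mult_low(1)[OF E0, of "inverse (fps_of_poly Q)"] assms(1) by auto
    hence "is_pade (k - 1) k f R"
      unfolding is_pade_def using dP dQ Q0 R_def by blast
    thus ?thesis by blast
  qed
  show "\<forall>R. is_pade (k - 1) k f R \<longrightarrow>
            (\<exists>h k'. h \<noteq> 0 \<and> k \<le> k' \<and> k' < l \<and>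
               (\<forall>m < k + k'. fps_nth (f - R) m = 0) \<and>
               fps_nth (f - R) (k + k') = h)"
  proof (intro allI impI)
    fix R assume "is_pade (k - 1) k f R"
    then obtain P Q where dP: "degree P \<le> k - 1" and dQ: "degree Q \<le> k" and Q0: "poly Q 0 \<noteq> 0"
      and R: "R = fps_of_poly P / fps_of_poly Q" and z: "\<forall>m \<le> k - 1 + k. fps_nth (f - R) m = 0"
      unfolding is_pade_def by blast
    have FQ0: "fps_nth (fps_of_poly Q) 0 \<noteq> 0" using Q0 by (simp add: poly_0_coeff_0)
    define E where "E = f * fps_of_poly Q - fps_of_poly P"
    have R': "R = fps_of_poly P * inverse (fps_of_poly Q)" using R FQ0 by (simp add: fps_divide_unit)
    have "(f - R) * fps_of_poly Q = E"
    proof -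
      have "(f - R) * fps_of_poly Q = f * fps_of_poly Q - fps_of_poly P * (inverse (fps_of_poly Q) * fps_of_poly Q)"
        by (simp add: R' algebra_simps)
      thus ?thesis using FQ0 by (simp add: inverse_mult_eq_1 E_def)
    qed
    have z': "\<forall>m<2*k. fps_nth (f - R) m = 0" using z assms(1) by auto
    have E0: "\<forall>m<2*k. fps_nth E m = 0"
      using fps_mult_low(1)[OF z', of "fps_of_poly Q"] \<open>(f - R) * fps_of_poly Q = E\<close> by simp
    have fR: "f - R = E * inverse (fps_of_poly Q)"
    proof -
      have "E * inverse (fps_of_poly Q) = (f - R) * (fps_of_poly Q * inverse (fps_of_poly Q))"
        by (simp add: \<open>(f - R) * fps_of_poly Q = E\<close>[symmetric] algebra_simps)
      thus ?thesis using FQ0 by (simp add: inverse_mult_eq_1')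
    qed
    have ex: "\<exists>m. m < k + l \<and> fps_nth E m \<noteq> 0"
    proof (rule ccontr)
      assume "\<not> ?thesis"
      hence Ez: "\<forall>m<k+l. fps_nth E m = 0" by auto
      define B where "B = mat l l (\<lambda>(i, j). fps_nth f (i + j))"
      define v where "v = vec l (\<lambda>t. if t \<le> k then coeff Q (k-t) else 0)"
      have Bc: "B \<in> carrier_mat l l" by (simp add: B_def)
      have vc: "v \<in> carrier_vec l" by (simp add: v_def)
      have vnz: "v \<noteq> 0\<^sub>v l"
      proof
        assume "v = 0\<^sub>v l"
        hence "v $ k = 0" using assms(2) by simp
        thus False using assms(2) Q0 by (simp add: v_def poly_0_coeff_0)
      qed
      have "B *\<^sub>v v = 0\<^sub>v l"
      proof (rule eq_vecI)
        fix i assume i: "i < dim_vec (0\<^sub>v l :: 'a vec)"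
        hence il: "i < l" by simp
        have "(B *\<^sub>v v) $ i = (\<Sum>t\<in>{0..<l}. fps_nth f (i+t) * v$t)"
          using il by (simp add: B_def scalar_prod_def row_def v_def)
        also have "\<dots> = (\<Sum>t\<in>{0..k}. fps_nth f (i+t) * v$t)"
          by (rule sum.mono_neutral_right) (use assms(2) in \<open>auto simp: v_def\<close>)
        also have "\<dots> = (\<Sum>t=0..k. fps_nth f (i+t) * coeff Q (k-t))"
          by (rule sum.cong) (use assms(2) in \<open>auto simp: v_def\<close>)
        also have "\<dots> = fps_nth (fps_of_poly Q * f) (i+k)"
          by (rule mult_nth_shift[OF dQ, symmetric])
        also have "\<dots> = fps_nth E (i+k) + coeff P (i+k)"
          by (simp add: E_def mult.commute)
        also have "coeff P (i+k) = 0"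
          using dP assms(1) by (intro coeff_eq_0) auto
        also have "fps_nth E (i+k) = 0" using Ez il by simp
        finally show "(B *\<^sub>v v) $ i = (0\<^sub>v l) $ i" using il by simp
      qed (auto simp: B_def)
      hence "det B = 0" using det_0_iff_vec_prod_zero[OF Bc] vc vnz by blast
      thus False using Hl by (simp add: B_def hankel_det_def)
    qed
    define m0 where "m0 = (LEAST m. fps_nth E m \<noteq> 0)"
    have m0: "fps_nth E m0 \<noteq> 0" unfolding m0_def using ex by (metis (mono_tags, lifting) LeastI)
    have m0l: "m0 < k + l" unfolding m0_def using ex by (meson Least_le le_less_trans)
    have bel: "\<forall>m<m0. fps_nth E m = 0" unfolding m0_def using not_less_Least by blast
    have m0k: "2*k \<le> m0" using E0 m0 by (meson not_le)
    show "\<exists>h k'. h \<noteq> 0 \<and> k \<le> k' \<and> k' < l \<and>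
               (\<forall>m < k + k'. fps_nth (f - R) m = 0) \<and>
               fps_nth (f - R) (k + k') = h"
    proof (intro exI conjI)
      have eq: "k + (m0 - k) = m0" using m0k by simp
      show "\<forall>m < k + (m0 - k). fps_nth (f - R) m = 0"
        unfolding eq fR using fps_mult_low(1)[OF bel] by blast
      show "fps_nth (f - R) (k + (m0 - k)) = fps_nth E m0 * fps_nth (inverse (fps_of_poly Q)) 0"
        unfolding eq fR by (rule fps_mult_low(2)[OF bel])
      show "fps_nth E m0 * fps_nth (inverse (fps_of_poly Q)) 0 \<noteq> 0" using m0 FQ0 by simp
      show "k \<le> m0 - k" using m0k by simp
      show "m0 - k < l" using m0l m0k by simp
    qed
  qed
qed

end
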